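(* Consider the network Polya contagion process on the complete graph on $N$ nodes with $\Delta_{r,i}(t)=\Delta_{b,i}(t)=\Delta>0$ for all nodes $i$ and times $t$. Let $\bar T=\sum_{k=1}^N T_k$, $\rho=\frac{\sum_{k=1}^N R_k}{\bar T}$ and $\delta=\frac{N\Delta}{\bar T}$. Then for every node $i$ and every $n\ge 2$, \[ P(Z_{i,n}=1,Z_{i,1}=1)=\rho\,\frac{\rho+(1+(N-1)\rho)\frac{\delta}{N}}{1+\delta}, \] and moreover, for any other node $k$ (and $n\ge 2$), \[ P(Z_{k,n}=1,Z_{i,1}=1)=\rho\,\frac{\rho+(1+(N-1)\rho)\frac{\delta}{N}}{1+\delta}. \]
   Context: Network Polya contagion process: $\mathcal{G}=(V,\mathcal{E})$ is a connected undirected graph, $V=\{1,\dots,N\}$, $\mathcal{N}_i'=\{i\}\cup\{v:(i,v)\in\mathcal{E}\}$; the complete graph has $\mathcal{N}_i'=V$ for all $i$. Each node $i$ has an urn initially containing $R_i\in\mathbb{Z}_{>0}$ red and $B_i\in\mathbb{Z}_{>0}$ black balls, $T_i=R_i+B_i$. The super urn of node $i$ is the union of the urns of nodes in $\mathcal{N}_i'$. At each time $t=1,2,\dots$ every node $i$ simultaneously draws from its super urn; $Z_{i,t}=1$ if red, $0$ if black; then $\Delta_{r,i}(t)$ red balls (if red drawn) or $\Delta_{b,i}(t)$ black balls (if black drawn) are added to node $i$'s own urn. Given the whole history, the time-$n$ draws are conditionally independent with $P(Z_{i,n}=1\mid\{Z_j^{n-1}\}_{j=1}^N)=\dfrac{\sum_{j\in\mathcal{N}_i'}\big(R_j+\sum_{t=1}^{n-1}Z_{j,t}\Delta_{r,j}(t)\big)}{\sum_{j\in\mathcal{N}_i'}\big(T_j+\sum_{t=1}^{n-1}(Z_{j,t}\Delta_{r,j}(t)+(1-Z_{j,t})\Delta_{b,j}(t))\big)}$.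 *)

theory Defs
  imports Complex_Main
begin

text \<open>A history up to time n is encoded as a set S of pairs (j,t), j in V, t in {1..n};
  (j,t) in S means Z_{j,t} = 1 (red drawn by node j at time t).
  nb i is the closed neighbourhood N_i' of node i.
  Dr j t, Db j t are the numbers of red / black balls added.\<close>

definition polya_red_prob ::
  "(nat \<Rightarrow> nat set) \<Rightarrow> (nat \<Rightarrow> nat) \<Rightarrow> (nat \<Rightarrow> nat) \<Rightarrow>
   (nat \<Rightarrow> nat \<Rightarrow> real) \<Rightarrow> (nat \<Rightarrow> nat \<Rightarrow> real) \<Rightarrow>
   (nat \<times> nat) set \<Rightarrow> nat \<Rightarrow> nat \<Rightarrow> real" where
  "polya_red_prob nb R B Dr Db S i n =
     (\<Sum>j\<in>nb i. real (R j) + (\<Sum>t\<in>{1..<n}. if (j,t) \<in> S then Dr j t else 0)) /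
     (\<Sum>j\<in>nb i. real (R j + B j) +
        (\<Sum>t\<in>{1..<n}. if (j,t) \<in> S then Dr j t else Db j t))"

definition polya_hist_prob ::
  "nat \<Rightarrow> (nat \<Rightarrow> nat set) \<Rightarrow> (nat \<Rightarrow> nat) \<Rightarrow> (nat \<Rightarrow> nat) \<Rightarrow>
   (nat \<Rightarrow> nat \<Rightarrow> real) \<Rightarrow> (nat \<Rightarrow> nat \<Rightarrow> real) \<Rightarrow>
   nat \<Rightarrow> (nat \<times> nat) set \<Rightarrow> real" where
  "polya_hist_prob N nb R B Dr Db n S =
     (\<Prod>t\<in>{1..n}. \<Prod>i\<in>{1..N}.
        (if (i,t) \<in> S then polya_red_prob nb R B Dr Db S i t
         else 1 - polya_red_prob nb R B Dr Db S i t))"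

definition polya_prob ::
  "nat \<Rightarrow> (nat \<Rightarrow> nat set) \<Rightarrow> (nat \<Rightarrow> nat) \<Rightarrow> (nat \<Rightarrow> nat) \<Rightarrow>
   (nat \<Rightarrow> nat \<Rightarrow> real) \<Rightarrow> (nat \<Rightarrow> nat \<Rightarrow> real) \<Rightarrow>
   nat \<Rightarrow> ((nat \<times> nat) set \<Rightarrow> bool) \<Rightarrow> real" where
  "polya_prob N nb R B Dr Db n E =
     (\<Sum>S\<in>Pow ({1..N} \<times> {1..n}). if E S then polya_hist_prob N nb R B Dr Db n S else 0)"

end

theory Submission
  imports Defs
begin

definition cnt :: "nat \<Rightarrow> (nat\<times>nat) set \<Rightarrow> nat \<Rightarrow> real" where
  "cnt N S t = (\<Sum>j\<in>{1..N}. \<Sum>t'\<in>{1..<t}. if (j,t')\<in>S then 1 else 0)"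

definition qq :: "nat \<Rightarrow> (nat \<Rightarrow> nat) \<Rightarrow> (nat \<Rightarrow> nat) \<Rightarrow> real \<Rightarrow> (nat\<times>nat) set \<Rightarrow> nat \<Rightarrow> real" where
  "qq N R B \<Delta> S t = ((\<Sum>j\<in>{1..N}. real (R j)) + \<Delta> * cnt N S t) /
      ((\<Sum>j\<in>{1..N}. real (R j + B j)) + real N * \<Delta> * real (t - 1))"

lemma red_prob_eq:
  "polya_red_prob (\<lambda>_. {1..N}) R B (\<lambda>_ _. \<Delta>) (\<lambda>_ _. \<Delta>) S i t = qq N R B \<Delta> S t"
proof -
  have num: "(\<Sum>j\<in>{1..N}. real (R j) + (\<Sum>t\<in>{1..<t}. if (j,t) \<in> S then \<Delta> else 0))
      = (\<Sum>j\<in>{1..N}. real (R j)) + \<Delta> * cnt N S t"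
    unfolding cnt_def by (simp add: sum.distrib sum_distrib_left if_distrib cong: if_cong)
  have den: "(\<Sum>j\<in>{1..N}. real (R j + B j) + (\<Sum>t\<in>{1..<t}. if (j,t) \<in> S then \<Delta> else \<Delta>))
      = (\<Sum>j\<in>{1..N}. real (R j + B j)) + real N * \<Delta> * real (t - 1)"
    by (simp add: sum.distrib)
  show ?thesis unfolding polya_red_prob_def qq_def num den ..
qed

lemma cnt_cong:
  assumes "\<And>j t'. t' < t \<Longrightarrow> (j,t') \<in> S \<longleftrightarrow> (j,t') \<in> S'"
  shows "cnt N S t = cnt N S' t"
  unfolding cnt_def using assms by (intro sum.cong refl) auto

lemma qq_cong:
  assumes "\<And>j t'. t' < t \<Longrightarrow> (j,t') \<in> S \<longleftrightarrow> (j,t') \<in> S'"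
  shows "qq N R B \<Delta> S t = qq N R B \<Delta> S' t"
  unfolding qq_def using cnt_cong[OF assms] by simp

lemma cnt_Suc:
  assumes "t \<ge> 1"
  shows "cnt N S (Suc t) = cnt N S t + (\<Sum>j\<in>{1..N}. if (j,t)\<in>S then 1 else 0)"
proof -
  have "{1..<Suc t} = insert t {1..<t}" using assms by auto
  then show ?thesis unfolding cnt_def by (simp add: sum.distrib)
qed


definition w :: "nat set \<Rightarrow> real \<Rightarrow> nat set \<Rightarrow> real" where
  "w V p A = (\<Prod>j\<in>V. if j\<in>A then p else 1-p)"

definition EE where
  "EE N R B \<Delta> n g = (\<Sum>S\<in>Pow ({1..N}\<times>{1..n}). g S * polya_hist_prob N (\<lambda>_. {1..N}) R B (\<lambda>_ _. \<Delta>) (\<lambda>_ _. \<Delta>) n S)"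

lemma hist_eq: "polya_hist_prob N (\<lambda>_. {1..N}) R B (\<lambda>_ _. \<Delta>) (\<lambda>_ _. \<Delta>) n S
   = (\<Prod>t\<in>{1..n}. w {1..N} (qq N R B \<Delta> S t) {i. (i,t)\<in>S})"
  unfolding polya_hist_prob_def w_def red_prob_eq by simp

lemma hist_step:
  assumes "S' \<subseteq> {1..N}\<times>{1..n}" "A \<subseteq> {1..N}"
  shows "polya_hist_prob N (\<lambda>_. {1..N}) R B (\<lambda>_ _. \<Delta>) (\<lambda>_ _. \<Delta>) (Suc n) (S' \<union> A \<times> {Suc n})
    = polya_hist_prob N (\<lambda>_. {1..N}) R B (\<lambda>_ _. \<Delta>) (\<lambda>_ _. \<Delta>) n S' * w {1..N} (qq N R B \<Delta> S' (Suc n)) A"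
proof -
  let ?S = "S' \<union> A \<times> {Suc n}"
  have ins: "{1..Suc n} = insert (Suc n) {1..n}" by auto
  have last: "w {1..N} (qq N R B \<Delta> ?S (Suc n)) {i. (i,Suc n)\<in>?S} = w {1..N} (qq N R B \<Delta> S' (Suc n)) A"
  proof -
    have "{i. (i,Suc n)\<in>?S} = A" using assms by auto
    moreover have "qq N R B \<Delta> ?S (Suc n) = qq N R B \<Delta> S' (Suc n)"
      by (rule qq_cong) auto
    ultimately show ?thesis by simp
  qed
  have rest: "(\<Prod>t\<in>{1..n}. w {1..N} (qq N R B \<Delta> ?S t) {i. (i,t)\<in>?S}) = (\<Prod>t\<in>{1..n}. w {1..N} (qq N R B \<Delta> S' t) {i. (i,t)\<in>S'})"
  proof (rule prod.cong[OF refl])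
    fix t assume t: "t \<in> {1..n}"
    have "{i. (i,t)\<in>?S} = {i. (i,t)\<in>S'}" using t by auto
    moreover have "qq N R B \<Delta> ?S t = qq N R B \<Delta> S' t"
      by (rule qq_cong) (use t in auto)
    ultimately show "w {1..N} (qq N R B \<Delta> ?S t) {i. (i,t)\<in>?S} = w {1..N} (qq N R B \<Delta> S' t) {i. (i,t)\<in>S'}" by simp
  qed
  have pi: "(\<Prod>t\<in>insert (Suc n) {1..n}. f t) = f (Suc n) * (\<Prod>t\<in>{1..n}. f t)" for f :: "nat \<Rightarrow> real" by simp
  show ?thesis unfolding hist_eq ins pi last rest by (simp add: mult.commute)
qed

lemma pow_decomp:
  "Pow ({1..N}\<times>{1..Suc n}) = (\<lambda>(S',A). S' \<union> A \<times> {Suc n}) ` (Pow ({1..N}\<times>{1..n}) \<times> Pow {1..N})"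
proof
  show "Pow ({1..N}\<times>{1..Suc n}) \<subseteq> (\<lambda>(S',A). S' \<union> A \<times> {Suc n}) ` (Pow ({1..N}\<times>{1..n}) \<times> Pow {1..N})"
  proof
    fix S assume S: "S \<in> Pow ({1..N}\<times>{1..Suc n})"
    let ?S' = "{x\<in>S. snd x \<le> n}" and ?A = "{j. (j, Suc n) \<in> S}"
    have "S = ?S' \<union> ?A \<times> {Suc n}" using S by (force simp: le_Suc_eq)
    moreover have "(?S', ?A) \<in> Pow ({1..N}\<times>{1..n}) \<times> Pow {1..N}" using S by auto
    ultimately show "S \<in> (\<lambda>(S',A). S' \<union> A \<times> {Suc n}) ` (Pow ({1..N}\<times>{1..n}) \<times> Pow {1..N})"
      by (intro image_eqI[where x="(?S', ?A)"]) simp_all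
  qed
qed auto

lemma pow_inj:
  "inj_on (\<lambda>(S',A). S' \<union> A \<times> {Suc n}) (Pow ({1..N}\<times>{1..n}) \<times> Pow {1..N})"
proof (rule inj_onI, clarify)
  fix S1 A1 S2 A2
  assume S1: "S1 \<subseteq> {1..N}\<times>{1..n}" and S2: "S2 \<subseteq> {1..N}\<times>{1..n}"
    and eq: "S1 \<union> A1 \<times> {Suc n} = S2 \<union> A2 \<times> {Suc n}"
  have "S1 = {x \<in> S1 \<union> A1 \<times> {Suc n}. snd x \<le> n}" using S1 by auto
  also have "\<dots> = {x \<in> S2 \<union> A2 \<times> {Suc n}. snd x \<le> n}" using eq by simp
  also have "\<dots> = S2" using S2 by auto
  finally have 1: "S1 = S2" .
  have "A1 = {j. (j,Suc n) \<in> S1 \<union> A1 \<times> {Suc n}}" using S1 by auto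
  also have "\<dots> = {j. (j,Suc n) \<in> S2 \<union> A2 \<times> {Suc n}}" using eq by simp
  also have "\<dots> = A2" using S2 by auto
  finally show "S1 = S2 \<and> A1 = A2" using 1 by simp
qed

lemma EE_step:
  "EE N R B \<Delta> (Suc n) g = EE N R B \<Delta> n (\<lambda>S'. \<Sum>A\<in>Pow {1..N}. g (S' \<union> A \<times> {Suc n}) * w {1..N} (qq N R B \<Delta> S' (Suc n)) A)"
proof -
  let ?H = "polya_hist_prob N (\<lambda>_. {1..N}) R B (\<lambda>_ _. \<Delta>) (\<lambda>_ _. \<Delta>)"
  have "EE N R B \<Delta> (Suc n) g = (\<Sum>(S',A)\<in>Pow ({1..N}\<times>{1..n}) \<times> Pow {1..N}.
      g (S' \<union> A \<times> {Suc n}) * ?H (Suc n) (S' \<union> A \<times> {Suc n}))"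
    unfolding EE_def pow_decomp by (subst sum.reindex[OF pow_inj]) (simp add: o_def case_prod_unfold)
  also have "\<dots> = (\<Sum>(S',A)\<in>Pow ({1..N}\<times>{1..n}) \<times> Pow {1..N}.
      g (S' \<union> A \<times> {Suc n}) * (?H n S' * w {1..N} (qq N R B \<Delta> S' (Suc n)) A))"
  proof (rule sum.cong[OF refl], clarify)
    fix S' A assume "S' \<subseteq> {1..N}\<times>{1..n}" "A \<subseteq> {1..N}"
    then show "g (S' \<union> A \<times> {Suc n}) * ?H (Suc n) (S' \<union> A \<times> {Suc n}) =
      g (S' \<union> A \<times> {Suc n}) * (?H n S' * w {1..N} (qq N R B \<Delta> S' (Suc n)) A)"
      by (simp only: hist_step)
  qed
  also have "\<dots> = (\<Sum>S'\<in>Pow ({1..N}\<times>{1..n}). \<Sum>A\<in>Pow {1..N}.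
      g (S' \<union> A \<times> {Suc n}) * (?H n S' * w {1..N} (qq N R B \<Delta> S' (Suc n)) A))"
    by (rule sum.cartesian_product[symmetric])
  also have "\<dots> = EE N R B \<Delta> n (\<lambda>S'. \<Sum>A\<in>Pow {1..N}. g (S' \<union> A \<times> {Suc n}) * w {1..N} (qq N R B \<Delta> S' (Suc n)) A)"
    unfolding EE_def by (intro sum.cong refl) (simp add: sum_distrib_left sum_distrib_right mult_ac)
  finally show ?thesis .
qed

lemma EE_0: "EE N R B \<Delta> 0 g = g {}"
  unfolding EE_def polya_hist_prob_def by simp

lemma EE_cong: "(\<And>S. S \<subseteq> {1..N}\<times>{1..n} \<Longrightarrow> g S = h S) \<Longrightarrow> EE N R B \<Delta> n g = EE N R B \<Delta> n h"
  unfolding EE_def by (intro sum.cong refl) auto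


lemma w_split: "finite V \<Longrightarrow> A \<subseteq> V \<Longrightarrow> w V p A = (\<Prod>j\<in>A. p) * (\<Prod>j\<in>V-A. 1-p)"
  unfolding w_def
  apply (subst prod.If_cases, simp)
  by (metis Diff_eq Int_absorb1 Collect_mem_eq)

lemma wsum:
  assumes "finite V" "K \<subseteq> V"
  shows "(\<Sum>A\<in>Pow V. if K \<subseteq> A then w V p A else 0) = p ^ card K"
proof -
  have "(\<Prod>i\<in>V. p + (if i\<in>K then 0 else 1-p)) = (\<Sum>A\<in>Pow V. (\<Prod>i\<in>A. p) * (\<Prod>i\<in>V - A. (if i\<in>K then 0 else 1-p)))"
    by (rule prod_add[OF assms(1)])
  also have "\<dots> = (\<Sum>A\<in>Pow V. if K \<subseteq> A then w V p A else 0)"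
  proof (rule sum.cong[OF refl])
    fix A assume A: "A \<in> Pow V"
    show "(\<Prod>i\<in>A. p) * (\<Prod>i\<in>V - A. (if i\<in>K then 0 else 1-p)) = (if K \<subseteq> A then w V p A else 0)"
    proof (cases "K \<subseteq> A")
      case True
      then have "(\<Prod>i\<in>V - A. (if i\<in>K then 0 else 1-p)) = (\<Prod>i\<in>V - A. 1-p)"
        by (intro prod.cong) auto
      then show ?thesis using True A w_split[OF assms(1)] by auto
    next
      case False
      then obtain x where "x \<in> K" "x \<notin> A" by auto
      then have "x \<in> V - A" using assms by auto
      then have "(\<Prod>i\<in>V - A. (if i\<in>K then 0 else 1-p)) = 0"
        using \<open>x\<in>K\<close> assms(1) by (intro prod_zero) auto
      then show ?thesis using False by simp
    qed
  qed
  finally have eq: "(\<Sum>A\<in>Pow V. if K \<subseteq> A then w V p A else 0) = (\<Prod>i\<in>V. p + (if i\<in>K then 0 else 1-p))" ..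
  have "(\<Prod>i\<in>V. p + (if i\<in>K then 0 else 1-p)) = (\<Prod>i\<in>V. if i\<in>K then p else 1)"
    by (intro prod.cong) auto
  also have "\<dots> = p ^ card K"
    using assms by (simp add: prod.If_cases Int_absorb1 Int_absorb2 Int_commute)
  finally show ?thesis using eq by simp
qed

lemma w_sum1: "finite V \<Longrightarrow> (\<Sum>A\<in>Pow V. w V p A) = 1"
  using wsum[of V "{}" p] by simp

lemma w_mem: "finite V \<Longrightarrow> k \<in> V \<Longrightarrow> (\<Sum>A\<in>Pow V. if k \<in> A then w V p A else 0) = p"
  using wsum[of V "{k}" p] by simp

lemma w_mem2: "finite V \<Longrightarrow> k \<in> V \<Longrightarrow> j \<in> V \<Longrightarrow>
   (\<Sum>A\<in>Pow V. if k \<in> A \<and> j \<in> A then w V p A else 0) = (if j = k then p else p^2)"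
  using wsum[of V "{k,j}" p] by (auto simp: card_insert_if power2_eq_square)

lemma w_count:
  assumes "finite V"
  shows "(\<Sum>A\<in>Pow V. w V p A * (\<Sum>j\<in>V. if j\<in>A then 1 else 0)) = real (card V) * p"
proof -
  have "(\<Sum>A\<in>Pow V. w V p A * (\<Sum>j\<in>V. if j\<in>A then 1 else 0)) = (\<Sum>j\<in>V. \<Sum>A\<in>Pow V. if j \<in> A then w V p A else 0)"
    by (subst sum.swap) (simp add: sum_distrib_left if_distrib cong: if_cong)
  also have "\<dots> = (\<Sum>j\<in>V. p)" using assms by (intro sum.cong refl) (simp add: w_mem)
  finally show ?thesis by simp
qed

lemma w_count_i:
  assumes "finite V" "i \<in> V"
  shows "(\<Sum>A\<in>Pow V. (if i\<in>A then w V p A else 0) * (\<Sum>j\<in>V. if j\<in>A then 1 else 0)) = p + (real (card V) - 1) * p^2"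
proof -
  have "(\<Sum>A\<in>Pow V. (if i\<in>A then w V p A else 0) * (\<Sum>j\<in>V. if j\<in>A then 1 else 0))
     = (\<Sum>A\<in>Pow V. \<Sum>j\<in>V. if i \<in> A \<and> j \<in> A then w V p A else 0)"
    by (intro sum.cong refl) (simp add: sum_distrib_left if_distrib cong: if_cong)
  also have "\<dots> = (\<Sum>j\<in>V. \<Sum>A\<in>Pow V. if i \<in> A \<and> j \<in> A then w V p A else 0)"
    by (rule sum.swap)
  also have "\<dots> = (\<Sum>j\<in>V. if j = i then p else p^2)" using assms by (intro sum.cong refl) (simp add: w_mem2)
  also have "\<dots> = p + (\<Sum>j\<in>V-{i}. p^2)"
    using assms by (simp add: sum.If_cases Int_absorb1 Diff_eq)
  also have "\<dots> = p + (real (card V) - 1) * p^2"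
  proof -
    have "card V \<ge> 1" using assms by (metis card_0_eq empty_iff less_one not_le)
    then show ?thesis using assms by (simp add: card_Diff_singleton of_nat_diff)
  qed
  finally show ?thesis .
qed


lemma cnt_add:
  assumes "S' \<subseteq> {1..N}\<times>{1..<m}" "m \<ge> 1"
  shows "cnt N (S' \<union> A \<times> {m}) (Suc m) = cnt N S' m + (\<Sum>j\<in>{1..N}. if j\<in>A then 1 else 0)"
proof -
  have "cnt N (S' \<union> A \<times> {m}) (Suc m) = cnt N (S' \<union> A \<times> {m}) m + (\<Sum>j\<in>{1..N}. if (j,m)\<in>S' \<union> A \<times> {m} then 1 else 0)"
    using assms(2) by (rule cnt_Suc)
  also have "cnt N (S' \<union> A \<times> {m}) m = cnt N S' m" by (rule cnt_cong) auto
  also have "(\<Sum>j\<in>{1..N}. if (j,m)\<in>S' \<union> A \<times> {m} then 1 else 0) = (\<Sum>j\<in>{1..N}. if j\<in>A then (1::real) else 0)"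
    by (intro sum.cong refl) (use assms in auto)
  finally show ?thesis .
qed

lemma alg: "(E::real) \<noteq> 0 \<Longrightarrow> D0 \<noteq> 0 \<Longrightarrow> E = D0 + n*d \<Longrightarrow> a / E + (d / E) * (n * (a / D0)) = a / D0"
proof -
  assume h: "(E::real) \<noteq> 0" "D0 \<noteq> 0" "E = D0 + n*d"
  have "a / E + (d / E) * (n * (a / D0)) = (a * D0 + d*n*a) / (E * D0)"
    using h(1,2) by (simp add: field_simps)
  also have "a * D0 + d*n*a = a * E" using h(3) by (simp add: algebra_simps)
  finally show ?thesis using h(1) by simp
qed

lemma mart:
  assumes m: "m \<ge> 1" and T: "(\<Sum>j\<in>{1..N}. real (R j + B j)) > 0" and D: "\<Delta> > 0"
  shows "EE N R B \<Delta> (Suc m) (\<lambda>S. (if (i,1)\<in>S then 1 else 0) * qq N R B \<Delta> S (Suc (Suc m)))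
       = EE N R B \<Delta> m (\<lambda>S. (if (i,1)\<in>S then 1 else 0) * qq N R B \<Delta> S (Suc m))"
  unfolding EE_step
proof (rule EE_cong)
  fix S' assume S': "S' \<subseteq> {1..N}\<times>{1..m}"
  define Rs where "Rs = (\<Sum>j\<in>{1..N}. real (R j))"
  define Tb where "Tb = (\<Sum>j\<in>{1..N}. real (R j + B j))"
  define a where "a = Rs + \<Delta> * cnt N S' (Suc m)"
  define D0 where "D0 = Tb + real N * \<Delta> * real m"
  define D1 where "D1 = Tb + real N * \<Delta> * real (Suc m)"
  define p where "p = qq N R B \<Delta> S' (Suc m)"
  define X where "X = (\<lambda>A. \<Sum>j\<in>{1..N}. if j\<in>A then 1 else (0::real))"
  have D0: "D0 > 0" unfolding D0_def Tb_def using T D by (simp add: add_pos_nonneg)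
  have D1: "D1 = D0 + real N * \<Delta>" unfolding D1_def D0_def by (simp add: algebra_simps)
  have p: "p = a / D0" unfolding p_def qq_def a_def D0_def Rs_def Tb_def by simp
  have I: "(if (i,1)\<in>S' \<union> A \<times> {Suc m} then 1 else 0) = (if (i,1)\<in>S' then 1 else (0::real))" for A
    using m by auto
  have q: "qq N R B \<Delta> (S' \<union> A \<times> {Suc m}) (Suc (Suc m)) = a / D1 + (\<Delta> / D1) * X A" if "A \<subseteq> {1..N}" for A
  proof -
    have "cnt N (S' \<union> A \<times> {Suc m}) (Suc (Suc m)) = cnt N S' (Suc m) + X A"
      unfolding X_def by (rule cnt_add) (use S' in auto)
    then show ?thesis unfolding qq_def a_def D1_def Rs_def Tb_def by (simp add: add_divide_distrib algebra_simps)
  qed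
  have "(\<Sum>A\<in>Pow {1..N}. (if (i,1)\<in>S' \<union> A \<times> {Suc m} then 1 else 0) * qq N R B \<Delta> (S' \<union> A \<times> {Suc m}) (Suc (Suc m)) * w {1..N} p A)
     = (if (i,1)\<in>S' then 1 else 0) * (\<Sum>A\<in>Pow {1..N}. (a / D1) * w {1..N} p A + (\<Delta> / D1) * (w {1..N} p A * X A))"
    unfolding sum_distrib_left by (intro sum.cong refl) (use m in \<open>simp add: I q algebra_simps\<close>)
  also have "(\<Sum>A\<in>Pow {1..N}. (a / D1) * w {1..N} p A + (\<Delta> / D1) * (w {1..N} p A * X A)) = a / D1 + (\<Delta> / D1) * (real N * p)"
    unfolding sum.distrib sum_distrib_left[symmetric] X_def by (simp add: w_sum1 w_count)
  also have "a / D1 + (\<Delta> / D1) * (real N * p) = p"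
  proof -
    have "D0 + real N * \<Delta> > 0" using D0 D by (simp add: add_pos_nonneg)
    then show ?thesis unfolding p using D0 D1 by (intro alg) (auto simp: mult.commute)
  qed
  finally show "(\<Sum>A\<in>Pow {1..N}. (if (i,1)\<in>S' \<union> A \<times> {Suc m} then 1 else 0) * qq N R B \<Delta> (S' \<union> A \<times> {Suc m}) (Suc (Suc m)) * w {1..N} (qq N R B \<Delta> S' (Suc m)) A)
     = (if (i,1)\<in>S' then 1 else 0) * qq N R B \<Delta> S' (Suc m)" unfolding p_def .
qed


lemma first_step:
  assumes m: "m \<ge> 1" and k: "k \<in> {1..N}"
  shows "EE N R B \<Delta> (Suc m) (\<lambda>S. if (k, Suc m) \<in> S \<and> (i,1) \<in> S then 1 else 0)
       = EE N R B \<Delta> m (\<lambda>S. (if (i,1)\<in>S then 1 else 0) * qq N R B \<Delta> S (Suc m))"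
  unfolding EE_step
proof (rule EE_cong)
  fix S' assume S': "S' \<subseteq> {1..N}\<times>{1..m}"
  define p where "p = qq N R B \<Delta> S' (Suc m)"
  have "(\<Sum>A\<in>Pow {1..N}. (if (k, Suc m) \<in> S' \<union> A \<times> {Suc m} \<and> (i,1) \<in> S' \<union> A \<times> {Suc m} then 1 else 0) * w {1..N} p A)
      = (\<Sum>A\<in>Pow {1..N}. (if (i,1)\<in>S' then 1 else 0) * (if k \<in> A then w {1..N} p A else 0))"
  proof (intro sum.cong refl)
    fix A assume "A \<in> Pow {1..N}"
    have "(k, Suc m) \<in> S' \<union> A \<times> {Suc m} \<longleftrightarrow> k \<in> A" using S' by auto
    moreover have "(i,1) \<in> S' \<union> A \<times> {Suc m} \<longleftrightarrow> (i,1)\<in>S'" using m by auto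
    ultimately show "(if (k, Suc m) \<in> S' \<union> A \<times> {Suc m} \<and> (i,1) \<in> S' \<union> A \<times> {Suc m} then 1 else 0) * w {1..N} p A
       = (if (i,1)\<in>S' then 1 else 0) * (if k \<in> A then w {1..N} p A else (0::real))" by simp
  qed
  also have "\<dots> = (if (i,1)\<in>S' then 1 else 0) * p"
    unfolding sum_distrib_left[symmetric] using w_mem[of "{1..N}" k p] k by simp
  finally show "(\<Sum>A\<in>Pow {1..N}. (if (k, Suc m) \<in> S' \<union> A \<times> {Suc m} \<and> (i,1) \<in> S' \<union> A \<times> {Suc m} then 1 else 0) * w {1..N} (qq N R B \<Delta> S' (Suc m)) A)
      = (if (i,1)\<in>S' then 1 else 0) * qq N R B \<Delta> S' (Suc m)" unfolding p_def .
qed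

lemma chain:
  assumes m: "m \<ge> 1" and T: "(\<Sum>j\<in>{1..N}. real (R j + B j)) > 0" and D: "\<Delta> > 0"
  shows "EE N R B \<Delta> m (\<lambda>S. (if (i,1)\<in>S then 1 else 0) * qq N R B \<Delta> S (Suc m))
       = EE N R B \<Delta> (Suc 0) (\<lambda>S. (if (i,1)\<in>S then 1 else 0) * qq N R B \<Delta> S (Suc (Suc 0)))"
  using m
proof (induct m rule: dec_induct)
  case base
  then show ?case by simp
next
  case (step m)
  then show ?case using mart[OF step(1) T D, of i] by simp
qed

lemma base:
  assumes i: "i \<in> {1..N}" and T: "(\<Sum>j\<in>{1..N}. real (R j + B j)) > 0" and D: "\<Delta> > 0"
  defines "Rs \<equiv> (\<Sum>j\<in>{1..N}. real (R j))"
  defines "Tb \<equiv> (\<Sum>j\<in>{1..N}. real (R j + B j))"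
  shows "EE N R B \<Delta> (Suc 0) (\<lambda>S. (if (i,1)\<in>S then 1 else 0) * qq N R B \<Delta> S (Suc (Suc 0)))
     = (Rs/Tb) * (Rs + \<Delta> * (1 + (real N - 1) * (Rs/Tb))) / (Tb + real N * \<Delta>)"
proof -
  define p where "p = Rs / Tb"
  define D1 where "D1 = Tb + real N * \<Delta>"
  define X where "X = (\<lambda>A. \<Sum>j\<in>{1..N}. if j\<in>A then 1 else (0::real))"
  have p: "qq N R B \<Delta> {} (Suc 0) = p" unfolding p_def qq_def cnt_def Rs_def Tb_def by simp
  have q: "qq N R B \<Delta> (A \<times> {Suc 0}) (Suc (Suc 0)) = Rs / D1 + (\<Delta> / D1) * X A" for A
  proof -
    have "cnt N (A \<times> {Suc 0}) (Suc (Suc 0)) = cnt N {} (Suc 0) + X A"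
      unfolding X_def using cnt_add[of "{}" N "Suc 0" A] by simp
    moreover have "cnt N {} (Suc 0) = 0" unfolding cnt_def by simp
    ultimately show ?thesis unfolding qq_def D1_def Rs_def Tb_def by (simp add: add_divide_distrib algebra_simps)
  qed
  have "EE N R B \<Delta> (Suc 0) (\<lambda>S. (if (i,1)\<in>S then 1 else 0) * qq N R B \<Delta> S (Suc (Suc 0)))
     = (\<Sum>A\<in>Pow {1..N}. (if (i,1)\<in>{} \<union> A \<times> {Suc 0} then 1 else 0) * qq N R B \<Delta> ({} \<union> A \<times> {Suc 0}) (Suc (Suc 0)) * w {1..N} p A)"
    unfolding EE_step EE_0 p ..
  also have "\<dots> = (\<Sum>A\<in>Pow {1..N}. (Rs / D1) * (if i \<in> A then w {1..N} p A else 0) + (\<Delta> / D1) * ((if i \<in> A then w {1..N} p A else 0) * X A))"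
    by (intro sum.cong refl) (simp add: q algebra_simps)
  also have "\<dots> = (Rs / D1) * p + (\<Delta> / D1) * (p + (real N - 1) * p^2)"
    unfolding sum.distrib sum_distrib_left[symmetric] X_def
    using i w_mem[of "{1..N}" i p] w_count_i[of "{1..N}" i p] by simp
  also have "\<dots> = p * (Rs + \<Delta> * (1 + (real N - 1) * p)) / D1"
    by (simp add: add_divide_distrib[symmetric] diff_divide_distrib[symmetric] algebra_simps power2_eq_square)
  finally show ?thesis unfolding p_def D1_def .
qed

lemma prob_EE: "polya_prob N (\<lambda>_. {1..N}) R B (\<lambda>_ _. \<Delta>) (\<lambda>_ _. \<Delta>) n E = EE N R B \<Delta> n (\<lambda>S. if E S then 1 else 0)"
  unfolding polya_prob_def EE_def by (intro sum.cong refl) simp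


theorem lemma2:
  fixes N :: nat and R B :: "nat \<Rightarrow> nat" and \<Delta> :: real and i n :: nat
  assumes "\<And>j. j \<in> {1..N} \<Longrightarrow> R j > 0"
      and "\<And>j. j \<in> {1..N} \<Longrightarrow> B j > 0"
      and "\<Delta> > 0"
      and "i \<in> {1..N}"
      and "n \<ge> 2"
  defines "Tbar \<equiv> (\<Sum>j\<in>{1..N}. real (R j + B j))"
  defines "\<rho> \<equiv> (\<Sum>j\<in>{1..N}. real (R j)) / Tbar"
  defines "\<delta> \<equiv> real N * \<Delta> / Tbar"
  defines "P \<equiv> polya_prob N (\<lambda>_. {1..N}) R B (\<lambda>_ _. \<Delta>) (\<lambda>_ _. \<Delta>) n"
  shows "P (\<lambda>S. (i, n) \<in> S \<and> (i, 1) \<in> S)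
           = \<rho> * (\<rho> + (1 + (real N - 1) * \<rho>) * \<delta> / real N) / (1 + \<delta>)
       \<and> (\<forall>k\<in>{1..N}. k \<noteq> i \<longrightarrow> P (\<lambda>S. (k, n) \<in> S \<and> (i, 1) \<in> S)
           = \<rho> * (\<rho> + (1 + (real N - 1) * \<rho>) * \<delta> / real N) / (1 + \<delta>))"
  proof -
  have N1: "N \<ge> 1" using assms(4) by simp
  have T: "Tbar > 0" unfolding Tbar_def
  proof (intro sum_pos)
    fix j assume "j \<in> {1..N}"
    then have "R j > 0" using assms(1) by blast
    then show "real (R j + B j) > 0" by simp
  qed (use N1 in auto)
  have Tb: "(\<Sum>j\<in>{1..N}. real (R j + B j)) > 0" using T unfolding Tbar_def .
  obtain m where nm: "n = Suc m" and m: "m \<ge> 1" using assms(5) by (metis Suc_le_D Suc_le_mono one_add_one plus_1_eq_Suc)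
  have alg2: "(Rs/Tbar) * (Rs + \<Delta> * (1 + (real N - 1) * (Rs/Tbar))) / (Tbar + real N * \<Delta>)
     = \<rho> * (\<rho> + (1 + (real N - 1) * \<rho>) * \<delta> / real N) / (1 + \<delta>)"
    if Rs: "Rs = (\<Sum>j\<in>{1..N}. real (R j))" for Rs
  proof -
    have rho: "\<rho> = Rs / Tbar" unfolding \<rho>_def Rs ..
    have Np: "real N > 0" using N1 by simp
    have d: "\<delta> / real N = \<Delta> / Tbar" unfolding \<delta>_def using Np by simp
    have 1: "1 + \<delta> = (Tbar + real N * \<Delta>) / Tbar" unfolding \<delta>_def using T by (simp add: field_simps)
    have 2: "\<rho> + (1 + (real N - 1) * \<rho>) * \<delta> / real N = (Rs + \<Delta> * (1 + (real N - 1) * (Rs/Tbar))) / Tbar"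
      unfolding rho \<delta>_def using T Np by (simp add: field_simps)
    have "\<rho> * (\<rho> + (1 + (real N - 1) * \<rho>) * \<delta> / real N) / (1 + \<delta>)
       = \<rho> * ((Rs + \<Delta> * (1 + (real N - 1) * (Rs/Tbar))) / Tbar) / ((Tbar + real N * \<Delta>) / Tbar)"
      by (simp only: 1 2)
    also have "\<dots> = (Rs/Tbar) * (Rs + \<Delta> * (1 + (real N - 1) * (Rs/Tbar))) / (Tbar + real N * \<Delta>)"
      unfolding rho using T by simp
    finally show ?thesis by simp
  qed
  have key: "P (\<lambda>S. (k, n) \<in> S \<and> (i, 1) \<in> S) = \<rho> * (\<rho> + (1 + (real N - 1) * \<rho>) * \<delta> / real N) / (1 + \<delta>)"
    if k: "k \<in> {1..N}" for k
  proof -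
    have "P (\<lambda>S. (k, n) \<in> S \<and> (i, 1) \<in> S) = EE N R B \<Delta> (Suc m) (\<lambda>S. if (k, Suc m) \<in> S \<and> (i,1) \<in> S then 1 else 0)"
      unfolding P_def prob_EE nm ..
    also have "\<dots> = EE N R B \<Delta> m (\<lambda>S. (if (i,1)\<in>S then 1 else 0) * qq N R B \<Delta> S (Suc m))"
      by (rule first_step[OF m k])
    also have "\<dots> = EE N R B \<Delta> (Suc 0) (\<lambda>S. (if (i,1)\<in>S then 1 else 0) * qq N R B \<Delta> S (Suc (Suc 0)))"
      by (rule chain[OF m Tb assms(3)])
    also have "\<dots> = ((\<Sum>j\<in>{1..N}. real (R j))/Tbar) * ((\<Sum>j\<in>{1..N}. real (R j)) + \<Delta> * (1 + (real N - 1) * ((\<Sum>j\<in>{1..N}. real (R j))/Tbar))) / (Tbar + real N * \<Delta>)"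
      unfolding Tbar_def by (rule base[OF assms(4) Tb assms(3)])
    also have "\<dots> = \<rho> * (\<rho> + (1 + (real N - 1) * \<rho>) * \<delta> / real N) / (1 + \<delta>)"
      by (rule alg2) (rule refl)
    finally show ?thesis .
  qed
  show ?thesis using key assms(4) by blast
qed

end
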